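(* In the setting described in the context, for every $t\in\{0,1,\dots,T\}$ the function $\tilde V^{(t)}_\theta(s)$, viewed as a function of $(\theta,s)$, is Lipschitz with constant $L_{\tilde V}^{(t)}=3T^2L_{\tilde R_\theta}\bar L_{\tilde f_\theta}^{T-t-1}$.
   Context: Transitions $s_{t+1}=f(s_t,a_t)+\zeta_t$ with $\zeta_t\sim p(\zeta)$ i.i.d.; deterministic policy $\pi_\theta$ perturbed by action noise $\xi\sim p_\xi$: $a=\pi_\theta(s)+\xi$. Let $\tilde f_\theta(s,\xi)=f(s,\pi_\theta(s)+\xi)$ and $\tilde R_\theta(s)=\mathbb{E}_{p_\xi}[R(s,\pi_\theta(s)+\xi)]$. Value functions: $\tilde V^{(T)}_\theta\equiv0$ and $\tilde V^{(t)}_\theta(s)=\mathbb{E}_{p_\xi(\xi),p(\zeta)}[\tilde R_\theta(s)+\tilde V^{(t+1)}_\theta(\tilde f_\theta(s,\xi)+\zeta)]$. $L_h$ is a Lipschitz constant (Euclidean norm) of $h$ jointly in all its arguments ($(\theta,s)$, resp. $(\theta,s,\xi)$), and $\bar L_h=\max\{L_{\nabla h},L_h,1\}$. Standing assumption: $\tilde f_\theta,\tilde R_\theta$ are Lipschitz and twice continuously differentiable with Lipschitz first derivative. *)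

theory Defs
  imports "HOL-Analysis.Analysis" "HOL-Probability.Probability"
begin

definition ftil :: "('s \<Rightarrow> 'a \<Rightarrow> 's) \<Rightarrow> ('p \<Rightarrow> 's \<Rightarrow> 'a::real_vector) \<Rightarrow> 'p \<Rightarrow> 's \<Rightarrow> 'a \<Rightarrow> 's" where
  "ftil f pol theta s xi = f s (pol theta s + xi)"

definition Rtil :: "('s \<Rightarrow> 'a \<Rightarrow> real) \<Rightarrow> ('p \<Rightarrow> 's \<Rightarrow> 'a::real_vector) \<Rightarrow> 'a measure \<Rightarrow> 'p \<Rightarrow> 's \<Rightarrow> real" where
  "Rtil R pol pxi theta s = (\<integral>xi. R s (pol theta s + xi) \<partial>pxi)"

fun Vrem :: "('p \<Rightarrow> 's \<Rightarrow> 'a \<Rightarrow> 's::real_vector) \<Rightarrow> ('p \<Rightarrow> 's \<Rightarrow> real) \<Rightarrow> 'a measure \<Rightarrow> 's measure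
              \<Rightarrow> nat \<Rightarrow> 'p \<Rightarrow> 's \<Rightarrow> real" where
  "Vrem ft Rt pxi pzeta 0 theta s = 0"
| "Vrem ft Rt pxi pzeta (Suc k) theta s =
     (\<integral>(xi, zeta). Rt theta s + Vrem ft Rt pxi pzeta k theta (ft theta s xi + zeta) \<partial>(pxi \<Otimes>\<^sub>M pzeta))"

text \<open>tilde V^{(t)}_theta(s) for horizon T (meaningful for t \<le> T).\<close>
definition Vtil :: "nat \<Rightarrow> ('p \<Rightarrow> 's \<Rightarrow> 'a \<Rightarrow> 's::real_vector) \<Rightarrow> ('p \<Rightarrow> 's \<Rightarrow> real) \<Rightarrow> 'a measure \<Rightarrow> 's measure
              \<Rightarrow> nat \<Rightarrow> 'p \<Rightarrow> 's \<Rightarrow> real" where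
  "Vtil T ft Rt pxi pzeta t = Vrem ft Rt pxi pzeta (T - t)"

definition Lbar :: "real \<Rightarrow> real \<Rightarrow> real" where
  "Lbar Lgrad L = max Lgrad (max L 1)"

end

theory Submission
  imports Defs
begin

lemma int_diff_bound:
  fixes g h :: "'b \<Rightarrow> real"
  assumes P: "prob_space M"
    and gm: "g \<in> borel_measurable M" and hm: "h \<in> borel_measurable M"
    and b: "\<And>x. \<bar>g x - h x\<bar> \<le> C"
  shows "\<bar>integral\<^sup>L M g - integral\<^sup>L M h\<bar> \<le> C"
proof -
  interpret prob_space M by (rule P)
  have dint: "integrable M (\<lambda>x. g x - h x)"
    by (rule integrable_const_bound[where B=C]) (use b gm hm in auto)
  show ?thesis
  proof (cases "integrable M h")
    case True
    have gi: "integrable M g"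
    proof -
      have "integrable M (\<lambda>x. (g x - h x) + h x)" by (rule Bochner_Integration.integrable_add[OF dint True])
      then show ?thesis by simp
    qed
    have "\<bar>integral\<^sup>L M g - integral\<^sup>L M h\<bar> = \<bar>integral\<^sup>L M (\<lambda>x. g x - h x)\<bar>"
      using gi True by simp
    also have "\<dots> \<le> integral\<^sup>L M (\<lambda>x. \<bar>g x - h x\<bar>)"
      by (rule integral_abs_bound)
    also have "\<dots> \<le> integral\<^sup>L M (\<lambda>x. C)"
      by (rule integral_mono) (use dint b in auto)
    also have "\<dots> = C" by (simp add: prob_space)
    finally show ?thesis .
  next
    case False
    have "\<not> integrable M g"
    proof
      assume "integrable M g"
      then have "integrable M (\<lambda>x. g x - (g x - h x))" by (rule Bochner_Integration.integrable_diff[OF _ dint])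
      moreover have "(\<lambda>x. g x - (g x - h x)) = h" by auto
      ultimately show False using False by simp
    qed
    then show ?thesis using False b[of undefined] by (auto simp: not_integrable_integral_eq)
  qed
qed

lemma Vrem_bound:
  fixes F :: "'p::euclidean_space \<Rightarrow> 's::euclidean_space \<Rightarrow> 'a::euclidean_space \<Rightarrow> 's"
    and Rt :: "'p \<Rightarrow> 's \<Rightarrow> real"
  assumes pxi: "prob_space pxi" "sets pxi = sets borel"
    and pzeta: "prob_space pzeta" "sets pzeta = sets borel"
    and Flip: "Lf-lipschitz_on UNIV (\<lambda>(theta, s, xi). F theta s xi)"
    and Rlip: "LR-lipschitz_on UNIV (\<lambda>(theta, s). Rt theta s)"
    and c1: "1 \<le> c" and cLf: "Lf \<le> c"
  shows "\<bar>Vrem F Rt pxi pzeta k th s - Vrem F Rt pxi pzeta k th' s'\<bar>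
          \<le> LR * c ^ (k - 1) * ((real k)\<^sup>2 * norm (th - th') + real k * norm (s - s'))"
proof (induction k arbitrary: th s th' s')
  case 0
  then show ?case by simp
next
  case (Suc k)
  let ?V = "Vrem F Rt pxi pzeta k"
  have LR0: "0 \<le> LR" using lipschitz_on_nonneg[OF Rlip] .
  have Lf0: "0 \<le> Lf" using lipschitz_on_nonneg[OF Flip] .
  have c0: "0 \<le> c" using c1 by simp
  have Fb: "norm (F a b x - F a' b' x) \<le> c * (norm (a - a') + norm (b - b'))" for a b a' b' x
  proof -
    have "norm (F a b x - F a' b' x) \<le> Lf * norm ((a, b, x) - (a', b', x))"
      using lipschitz_on_normD[OF Flip, of "(a,b,x)" "(a',b',x)"] by simp
    also have "norm ((a, b, x) - (a', b', x)) \<le> norm (a - a') + norm (b - b')"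
      using norm_Pair_le[of "a - a'" "(b - b', 0::'a)"] by (simp add: norm_Pair)
    then have "Lf * norm ((a, b, x) - (a', b', x)) \<le> Lf * (norm (a - a') + norm (b - b'))"
      using Lf0 by (intro mult_left_mono)
    also have "\<dots> \<le> c * (norm (a - a') + norm (b - b'))"
      by (rule mult_right_mono) (use cLf in auto)
    finally show ?thesis .
  qed
  have Fx: "norm (F a b x - F a b x') \<le> Lf * norm (x - x')" for a b x x'
    using lipschitz_on_normD[OF Flip, of "(a,b,x)" "(a,b,x')"] by (simp add: norm_Pair)
  have Rb: "\<bar>Rt a b - Rt a' b'\<bar> \<le> LR * (norm (a - a') + norm (b - b'))" for a b a' b'
  proof -
    have "\<bar>Rt a b - Rt a' b'\<bar> \<le> LR * norm ((a, b) - (a', b'))"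
      using lipschitz_on_normD[OF Rlip, of "(a,b)" "(a',b')"] by simp
    also have "\<dots> \<le> LR * (norm (a - a') + norm (b - b'))"
      using LR0 norm_Pair_le[of "a - a'" "b - b'"] by (intro mult_left_mono) auto
    finally show ?thesis .
  qed
  have Vcont: "continuous_on UNIV (?V a)" for a
  proof (rule lipschitz_on_continuous_on)
    show "(LR * c ^ (k - 1) * real k)-lipschitz_on UNIV (?V a)"
    proof (rule lipschitz_onI)
      fix x y
      show "dist (?V a x) (?V a y) \<le> LR * c ^ (k - 1) * real k * dist x y"
        using Suc.IH[of a x a y] by (simp add: dist_norm dist_real_def algebra_simps)
      show "0 \<le> LR * c ^ (k - 1) * real k" using LR0 c0 by simp
    qed
  qed
  have Fcont: "continuous_on UNIV (F a b)" for a b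
  proof (rule lipschitz_on_continuous_on)
    show "Lf-lipschitz_on UNIV (F a b)"
      by (rule lipschitz_onI) (use Fx Lf0 in \<open>auto simp: dist_norm\<close>)
  qed
  have sets_eq: "sets (pxi \<Otimes>\<^sub>M pzeta) = sets (borel :: ('a \<times> 's) measure)"
  proof -
    have "sets (pxi \<Otimes>\<^sub>M pzeta) = sets ((borel :: 'a measure) \<Otimes>\<^sub>M (borel :: 's measure))"
      by (rule sets_pair_measure_cong) (use pxi pzeta in auto)
    then show ?thesis by (metis borel_prod)
  qed
  have meas: "(\<lambda>(xi, zeta). Rt a b + ?V a (F a b xi + zeta)) \<in> borel_measurable (pxi \<Otimes>\<^sub>M pzeta)" for a b
  proof -
    have "continuous_on UNIV (\<lambda>z. ?V a (F a b (fst z) + snd z))"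
      by (rule continuous_on_compose2[OF Vcont]) (auto intro!: continuous_intros continuous_on_compose2[OF Fcont])
    then have "(\<lambda>z. Rt a b + ?V a (F a b (fst z) + snd z)) \<in> borel_measurable borel"
      by (intro borel_measurable_continuous_onI continuous_intros)
    then show ?thesis
      unfolding case_prod_beta' measurable_cong_sets[OF sets_eq refl] .
  qed
  define C where "C = LR * c ^ k * ((real (Suc k))\<^sup>2 * norm (th - th') + real (Suc k) * norm (s - s'))"
  have pt: "\<bar>(\<lambda>(xi, zeta). Rt th s + ?V th (F th s xi + zeta)) z -
             (\<lambda>(xi, zeta). Rt th' s' + ?V th' (F th' s' xi + zeta)) z\<bar> \<le> C" for z
  proof -
    obtain xi zeta where z: "z = (xi, zeta)" by fastforce
    define a where "a = norm (th - th')"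
    define b where "b = norm (s - s')"
    have a0: "0 \<le> a" and b0: "0 \<le> b" unfolding a_def b_def by auto
    have e1: "\<bar>Rt th s - Rt th' s'\<bar> \<le> LR * (a + b)" using Rb unfolding a_def b_def .
    have e2: "\<bar>?V th (F th s xi + zeta) - ?V th' (F th' s' xi + zeta)\<bar>
        \<le> LR * c ^ (k - 1) * ((real k)\<^sup>2 * a + real k * norm (F th s xi - F th' s' xi))"
      using Suc.IH[of th "F th s xi + zeta" th' "F th' s' xi + zeta"] unfolding a_def by simp
    have "LR * c ^ (k - 1) * ((real k)\<^sup>2 * a + real k * norm (F th s xi - F th' s' xi))
          \<le> LR * c ^ (k - 1) * ((real k)\<^sup>2 * a + real k * (c * (a + b)))"
      using Fb[of th s xi th' s'] LR0 c0 unfolding a_def b_def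
      by (intro mult_left_mono add_left_mono) auto
    with e1 e2 have tot: "\<bar>(Rt th s + ?V th (F th s xi + zeta)) - (Rt th' s' + ?V th' (F th' s' xi + zeta))\<bar>
        \<le> LR * (a + b) + LR * c ^ (k - 1) * ((real k)\<^sup>2 * a + real k * (c * (a + b)))"
      by linarith
    have fin: "LR * (a + b) + LR * c ^ (k - 1) * ((real k)\<^sup>2 * a + real k * (c * (a + b))) \<le> C"
    proof (cases k)
      case 0
      then show ?thesis unfolding C_def a_def b_def by simp
    next
      case (Suc m)
      have ck: "c ^ (k - 1) * c = c ^ k" using Suc by simp
      have ck1: "c ^ (k - 1) \<le> c ^ k" using c1 Suc by (simp add: power_increasing)
      have cg1: "1 \<le> c ^ k" using c1 by simp
      have "LR * (a + b) + LR * c ^ (k - 1) * ((real k)\<^sup>2 * a + real k * (c * (a + b)))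
          = LR * (a + b) + LR * (c ^ (k - 1)) * (real k)\<^sup>2 * a + LR * (c ^ (k - 1) * c) * real k * (a + b)"
        by (simp add: algebra_simps)
      also have "\<dots> \<le> LR * c ^ k * (a + b) + LR * c ^ k * (real k)\<^sup>2 * a + LR * c ^ k * real k * (a + b)"
      proof -
        have "LR * (a + b) \<le> LR * c ^ k * (a + b)"
          using cg1 LR0 a0 b0 mult_right_mono[OF mult_left_mono[OF cg1 LR0], of "a+b"] by simp
        moreover have "LR * (c ^ (k - 1)) * (real k)\<^sup>2 * a \<le> LR * c ^ k * (real k)\<^sup>2 * a"
          using ck1 LR0 a0 by (intro mult_right_mono mult_left_mono) auto
        ultimately show ?thesis unfolding ck by linarith
      qed
      also have "\<dots> = LR * c ^ k * ((1 + real k + (real k)\<^sup>2) * a + (1 + real k) * b)"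
        by (simp add: algebra_simps)
      also have "\<dots> \<le> C"
      proof -
        have "(1 + real k + (real k)\<^sup>2) * a \<le> (real (Suc k))\<^sup>2 * a"
          using a0 by (intro mult_right_mono) (auto simp: power2_eq_square algebra_simps)
        then have "(1 + real k + (real k)\<^sup>2) * a + (1 + real k) * b
             \<le> (real (Suc k))\<^sup>2 * a + real (Suc k) * b" by simp
        then show ?thesis unfolding C_def a_def[symmetric] b_def[symmetric]
          using LR0 c0 by (intro mult_left_mono) auto
      qed
      finally show ?thesis .
    qed
    show ?thesis using tot fin z by simp
  qed
  have "\<bar>Vrem F Rt pxi pzeta (Suc k) th s - Vrem F Rt pxi pzeta (Suc k) th' s'\<bar> \<le> C"
    unfolding Vrem.simps
    by (rule int_diff_bound[OF prob_space_pair[OF pxi(1) pzeta(1)] meas meas pt])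
  then show ?case unfolding C_def by simp
qed

theorem lemma4:
  fixes f :: "'s::euclidean_space \<Rightarrow> 'a::euclidean_space \<Rightarrow> 's"
    and pol :: "'p::euclidean_space \<Rightarrow> 's \<Rightarrow> 'a"
    and R :: "'s \<Rightarrow> 'a \<Rightarrow> real"
    and pxi :: "'a measure" and pzeta :: "'s measure"
    and T :: nat
    and Lf LDf LR LDR :: real
    and Df :: "'p \<times> 's \<times> 'a \<Rightarrow> ('p \<times> 's \<times> 'a) \<Rightarrow>\<^sub>L 's"
    and DR :: "'p \<times> 's \<Rightarrow> ('p \<times> 's) \<Rightarrow>\<^sub>L real"
  assumes pxi: "prob_space pxi" "sets pxi = sets borel"
    and pzeta: "prob_space pzeta" "sets pzeta = sets borel"
    \<comment> \<open>tilde f_theta: Lipschitz jointly in (theta,s,xi), C^2 with Lipschitz first derivative\<close>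
    and f_lip: "Lf-lipschitz_on UNIV (\<lambda>(theta, s, xi). ftil f pol theta s xi)"
    and f_deriv: "\<And>z. ((\<lambda>(theta, s, xi). ftil f pol theta s xi) has_derivative blinfun_apply (Df z)) (at z)"
    and f_C2: "\<exists>D2 :: 'p \<times> 's \<times> 'a \<Rightarrow> ('p \<times> 's \<times> 'a) \<Rightarrow>\<^sub>L (('p \<times> 's \<times> 'a) \<Rightarrow>\<^sub>L 's).
                 (\<forall>z. (Df has_derivative blinfun_apply (D2 z)) (at z)) \<and> continuous_on UNIV D2"
    and Df_lip: "LDf-lipschitz_on UNIV Df"
    \<comment> \<open>tilde R_theta: Lipschitz jointly in (theta,s), C^2 with Lipschitz first derivative\<close>
    and R_lip: "LR-lipschitz_on UNIV (\<lambda>(theta, s). Rtil R pol pxi theta s)"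
    and R_deriv: "\<And>z. ((\<lambda>(theta, s). Rtil R pol pxi theta s) has_derivative blinfun_apply (DR z)) (at z)"
    and R_C2: "\<exists>D2 :: 'p \<times> 's \<Rightarrow> ('p \<times> 's) \<Rightarrow>\<^sub>L (('p \<times> 's) \<Rightarrow>\<^sub>L real).
                 (\<forall>z. (DR has_derivative blinfun_apply (D2 z)) (at z)) \<and> continuous_on UNIV D2"
    and DR_lip: "LDR-lipschitz_on UNIV DR"
  shows "\<forall>t \<le> T.
           (3 * (real T)\<^sup>2 * LR * Lbar LDf Lf powi (int T - int t - 1))-lipschitz_on UNIV
             (\<lambda>(theta, s). Vtil T (ftil f pol) (Rtil R pol pxi) pxi pzeta t theta s)"
proof (intro allI impI)
  fix t assume tT: "t \<le> T"
  define c where "c = Lbar LDf Lf"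
  define k where "k = T - t"
  have c1: "1 \<le> c" and cLf: "Lf \<le> c" unfolding c_def Lbar_def by auto
  have LR0: "0 \<le> LR" using lipschitz_on_nonneg[OF R_lip] .
  have Flip: "Lf-lipschitz_on UNIV (\<lambda>(theta, s, xi). ftil f pol theta s xi)" by (rule f_lip)
  note B = Vrem_bound[OF pxi pzeta Flip R_lip c1 cLf]
  have pw: "c powi (int T - int t - 1) = (if k = 0 then inverse c else c ^ (k - 1))"
  proof (cases "k = 0")
    case True
    then have "int T - int t - 1 = -1" using tT unfolding k_def by simp
    then show ?thesis using True by (simp add: power_int_minus)
  next
    case False
    then have e: "int T - int t - 1 = int (k - 1)" using tT unfolding k_def by simp
    have "c powi (int T - int t - 1) = c ^ (k - 1)" by (subst e) (rule power_int_of_nat)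
    then show ?thesis using False by simp
  qed
  define K where "K = 3 * (real T)\<^sup>2 * LR * c powi (int T - int t - 1)"
  have K0: "0 \<le> K" unfolding K_def pw using LR0 c1 by simp
  show "(3 * (real T)\<^sup>2 * LR * Lbar LDf Lf powi (int T - int t - 1))-lipschitz_on UNIV
             (\<lambda>(theta, s). Vtil T (ftil f pol) (Rtil R pol pxi) pxi pzeta t theta s)"
    unfolding c_def[symmetric] K_def[symmetric]
  proof (rule lipschitz_onI[OF _ K0])
    fix x y :: "'p \<times> 's"
    obtain a b where x: "x = (a, b)" by fastforce
    obtain a' b' where y: "y = (a', b')" by fastforce
    let ?V = "Vrem (ftil f pol) (Rtil R pol pxi) pxi pzeta k"
    have d1: "norm (a - a') \<le> dist x y" and d2: "norm (b - b') \<le> dist x y"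
      unfolding x y dist_norm by (auto simp: norm_Pair intro: real_sqrt_ge_abs1 real_sqrt_ge_abs2
          norm_fst_le[of "(a - a', b - b')", simplified] norm_snd_le[of "(a - a', b - b')", simplified])
    have "\<bar>?V a b - ?V a' b'\<bar> \<le> LR * c ^ (k - 1) * ((real k)\<^sup>2 * norm (a - a') + real k * norm (b - b'))"
      by (rule B)
    also have "\<dots> \<le> K * dist x y"
    proof (cases "k = 0")
      case True then show ?thesis using K0 by simp
    next
      case False
      have kT: "real k \<le> real T" unfolding k_def by simp
      have k1: "1 \<le> real k" using False by simp
      have "(real k)\<^sup>2 * norm (a - a') + real k * norm (b - b') \<le> (real k)\<^sup>2 * dist x y + real k * dist x y"
        using d1 d2 by (intro add_mono mult_left_mono) auto
      also have "\<dots> \<le> 3 * (real T)\<^sup>2 * dist x y"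
      proof -
        have "real k \<le> (real k)\<^sup>2" using k1 by (simp add: power2_eq_square)
        moreover have "(real k)\<^sup>2 \<le> (real T)\<^sup>2" using kT by (simp add: power_mono)
        moreover have "0 \<le> (real T)\<^sup>2" by simp
        ultimately have "(real k)\<^sup>2 + real k \<le> 3 * (real T)\<^sup>2" by linarith
        then have "((real k)\<^sup>2 + real k) * dist x y \<le> (3 * (real T)\<^sup>2) * dist x y"
          by (intro mult_right_mono) auto
        then show ?thesis by (simp add: algebra_simps)
      qed
      finally have "LR * c ^ (k - 1) * ((real k)\<^sup>2 * norm (a - a') + real k * norm (b - b'))
          \<le> LR * c ^ (k - 1) * (3 * (real T)\<^sup>2 * dist x y)"
        using LR0 c1 by (intro mult_left_mono) auto
      then show ?thesis unfolding K_def pw using False by (simp add: algebra_simps)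
    qed
    finally show "dist ((\<lambda>(theta, s). Vtil T (ftil f pol) (Rtil R pol pxi) pxi pzeta t theta s) x)
        ((\<lambda>(theta, s). Vtil T (ftil f pol) (Rtil R pol pxi) pxi pzeta t theta s) y) \<le> K * dist x y"
      unfolding x y Vtil_def k_def by (simp add: dist_real_def)
  qed
qed

end
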